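(* Let $\xi>0$, $v_2<v_1$ with either $v_2<0<v_1$ or $0<v_2<v_1$, $q\in[0,1]$, and for $\lambda>0$ let $\tilde p(x,t)$ be the (generalized) density of the position $\tilde X(t)$ of the extended telegraph process driven by GCPs with parameter $\lambda$ with Poissonian resets to the origin at rate $\xi$, with $\tilde X(0)=0$ and random initial velocity $V_0$, $P\{V_0=v_1\}=q=1-P\{V_0=v_2\}$. Then for $t>0$ and $v_2t<x<v_1t$, $$ \lim_{\lambda\to+\infty}\tilde p(x,t)=\mathbb 1_{\{v_2t<x<v_1t\}}\frac{e^{-\xi t}}{(v_1-v_2)t}+\frac{\xi}{v_1-v_2}\boldsymbol I(x,t)\Gamma^\xi(x,t), $$ where $\Gamma^\xi(x,t)=\Gamma[0,M_x\xi,t\xi]$ if $v_2<0<v_1$ and $\Gamma^\xi(x,t)=\Gamma[0,\frac x{v_1}\xi,m_{x,t}\xi]$ if $0<v_2<v_1$.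
   Context: GCP with intensity $\lambda>0$: a Poisson process whose rate is random, exponentially distributed with mean $\lambda$; increments satisfy $P\{\tilde N_\lambda(t+s)-\tilde N_\lambda(t)=k\}=\frac{1}{1+\lambda s}(\frac{\lambda s}{1+\lambda s})^k$. The process: a particle starts at the origin with initial velocity $V(0)$ ($v_1,v_2\ne0$, $v_2<v_1$), moves with velocity alternating between $v_1$ and $v_2$, the periods at velocity $v_1$ and at $v_2$ being governed by two independent GCPs of intensity $\lambda$; additionally it is instantaneously reset to the origin at the epochs of an independent Poisson process of rate $\xi$, restarting afresh with its initial velocity. Conditional on $V(0)=v_j$, the density is $\tilde p(x,t|v_j)=e^{-\xi t}p(x,t|v_j)+\xi\int_0^te^{-\xi s}p(x,s|v_j)ds$, where $p(x,t|v_j)=\frac{\delta(x-v_jt)}{1+\lambda t}+\mathbb 1_{\{v_2t<x<v_1t\}}\frac{\lambda}{(v_1-v_2)(1+\lambda t)}$; $\tilde p(x,t)=q\tilde p(x,t|v_1)+(1-q)\tilde p(x,t|v_2)$. Notation: $M_x=\max\{x/v_1,x/v_2\}$, $m_{x,t}=\min\{x/v_2,t\}$, $\Gamma(a,z_0,z_1)=\int_{z_0}^{z_1}s^{a-1}e^{-s}ds$, $\boldsymbol I(x,t)=\mathbb 1_{\{\min\{v_2t,0\}<x<v_1t\}}$. *)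

theory Defs
  imports "HOL-Analysis.Analysis"
begin

text \<open>Absolutely continuous part of the density of the GCP-driven telegraph process
  (without resets) at time s, i.e. the indicator term of p(x,s|v_j); it does not depend on v_j.\<close>
definition p_ac :: "real \<Rightarrow> real \<Rightarrow> real \<Rightarrow> real \<Rightarrow> real \<Rightarrow> real" where
  "p_ac lam v1 v2 x s =
     (if v2 * s < x \<and> x < v1 * s then lam / ((v1 - v2) * (1 + lam * s)) else 0)"

text \<open>The contribution of the singular (Dirac) part of p(x,s|v) to the reset integral:
  the value of  \<integral>_0^t e^{-\<xi> s} \<delta>(x - v s) / (1 + lam s) ds,
  obtained from the defining property of the Dirac delta (root s = x/v, factor 1/|v|).\<close>
definition delta_int :: "real \<Rightarrow> real \<Rightarrow> real \<Rightarrow> real \<Rightarrow> real \<Rightarrow> real" where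
  "delta_int xi lam v x t =
     (if v \<noteq> 0 \<and> 0 < x / v \<and> x / v < t
      then exp (- xi * (x / v)) / (\<bar>v\<bar> * (1 + lam * (x / v))) else 0)"

text \<open>Generalized density p~(x,t|v_j) evaluated at a point x with x \<noteq> v_j t
  (so the atom e^{-\<xi> t} \<delta>(x - v_j t)/(1+lam t) contributes nothing):
  p~(x,t|v) = e^{-\<xi> t} p(x,t|v) + \<xi> \<integral>_0^t e^{-\<xi> s} p(x,s|v) ds.\<close>
definition tilde_p_cond :: "real \<Rightarrow> real \<Rightarrow> real \<Rightarrow> real \<Rightarrow> real \<Rightarrow> real \<Rightarrow> real \<Rightarrow> real" where
  "tilde_p_cond xi lam v1 v2 v x t =
     exp (- xi * t) * p_ac lam v1 v2 x t
     + xi * (integral {0..t} (\<lambda>s. exp (- xi * s) * p_ac lam v1 v2 x s) + delta_int xi lam v x t)"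

definition tilde_p :: "real \<Rightarrow> real \<Rightarrow> real \<Rightarrow> real \<Rightarrow> real \<Rightarrow> real \<Rightarrow> real \<Rightarrow> real" where
  "tilde_p xi lam q v1 v2 x t =
     q * tilde_p_cond xi lam v1 v2 v1 x t + (1 - q) * tilde_p_cond xi lam v1 v2 v2 x t"

text \<open>Incomplete gamma function \<Gamma>(a,z0,z1) = \<integral>_{z0}^{z1} s^{a-1} e^{-s} ds, as an
  extended nonnegative value (it may be +\<infinity> for a = 0, z0 = 0).\<close>
definition inc_Gamma :: "real \<Rightarrow> real \<Rightarrow> real \<Rightarrow> ennreal" where
  "inc_Gamma a z0 z1 = (\<integral>\<^sup>+ s \<in> {z0..z1}. ennreal (s powr (a - 1) * exp (- s)) \<partial>lborel)"

definition M_x :: "real \<Rightarrow> real \<Rightarrow> real \<Rightarrow> real" where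
  "M_x v1 v2 x = max (x / v1) (x / v2)"

definition m_xt :: "real \<Rightarrow> real \<Rightarrow> real \<Rightarrow> real" where
  "m_xt v2 x t = min (x / v2) t"

definition I_ind :: "real \<Rightarrow> real \<Rightarrow> real \<Rightarrow> real \<Rightarrow> real" where
  "I_ind v1 v2 x t = (if min (v2 * t) 0 < x \<and> x < v1 * t then 1 else 0)"

definition Gamma_xi :: "real \<Rightarrow> real \<Rightarrow> real \<Rightarrow> real \<Rightarrow> real \<Rightarrow> ennreal" where
  "Gamma_xi xi v1 v2 x t =
     (if v2 < 0 \<and> 0 < v1 then inc_Gamma 0 (M_x v1 v2 x * xi) (t * xi)
      else inc_Gamma 0 (x / v1 * xi) (m_xt v2 x t * xi))"

end

theory Submission imports Defs begin

lemma gl_meas_leb: "(\<lambda>s. exp (- xi * s) * p_ac l v1 v2 x s) \<in> borel_measurable (lebesgue_on S)"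
  apply (rule measurable_restrict_space1, rule measurable_completion)
  unfolding p_ac_def by measurable

lemma pac_nonneg: "l \<ge> 0 \<Longrightarrow> s \<ge> 0 \<Longrightarrow> v2 < v1 \<Longrightarrow> 0 \<le> p_ac l v1 v2 x s"
  unfolding p_ac_def by simp

lemma pac_mono: "0 \<le> l \<Longrightarrow> l \<le> m \<Longrightarrow> s \<ge> 0 \<Longrightarrow> v2 < v1 \<Longrightarrow>
   p_ac l v1 v2 x s \<le> p_ac m v1 v2 x s"
proof -
  assume h: "0 \<le> l" "l \<le> m" "s \<ge> 0" "v2 < v1"
  have c: "v1 - v2 > 0" using h by simp
  have "l * (1 + m * s) \<le> m * (1 + l * s)" using h by (simp add: algebra_simps)
  then have "l / (1 + l * s) \<le> m / (1 + m * s)"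
    using h by (simp add: divide_simps add_pos_nonneg)
  then have ineq: "l / (1 + l * s) / (v1 - v2) \<le> m / (1 + m * s) / (v1 - v2)"
    by (rule divide_right_mono) (use c in auto)
  have fin: "l / ((v1 - v2) * (1 + l * s)) \<le> m / ((v1 - v2) * (1 + m * s))"
    using ineq by (metis divide_divide_eq_left mult.commute)
  show ?thesis unfolding p_ac_def using fin by auto
qed

lemma pac_le: "0 \<le> l \<Longrightarrow> s \<ge> 0 \<Longrightarrow> v2 < v1 \<Longrightarrow>
   p_ac l v1 v2 x s \<le> (if v2 * s < x \<and> x < v1 * s then 1 / ((v1 - v2) * s) else 0)"
proof -
  assume h: "0 \<le> l" "s \<ge> 0" "v2 < v1"
  show ?thesis
  proof (cases "v2 * s < x \<and> x < v1 * s")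
    case True
    then have s: "s > 0" using h by (cases "s = 0") auto
    have c: "v1 - v2 > 0" using h by simp
    have "l / (1 + l * s) \<le> 1 / s"
      using h s by (simp add: divide_simps add_pos_nonneg)
    then have ineq: "l / (1 + l * s) / (v1 - v2) \<le> 1 / s / (v1 - v2)"
      by (rule divide_right_mono) (use c in auto)
    have fin: "l / ((v1 - v2) * (1 + l * s)) \<le> 1 / ((v1 - v2) * s)"
      using ineq by (metis divide_divide_eq_left mult.commute)
    show ?thesis unfolding p_ac_def by (simp only: if_P[OF True] fin)
  next
    case False
    show ?thesis unfolding p_ac_def by (simp only: if_not_P[OF False] order_refl)
  qed
qed

lemma pac_bound: "0 \<le> l \<Longrightarrow> s \<ge> 0 \<Longrightarrow> v2 < v1 \<Longrightarrow> p_ac l v1 v2 x s \<le> l / (v1 - v2)"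
proof -
  assume h: "0 \<le> l" "s \<ge> 0" "v2 < v1"
  have c: "v1 - v2 > 0" using h by simp
  have "l / ((v1 - v2) * (1 + l * s)) \<le> l / ((v1 - v2) * 1)"
    using h c by (intro divide_left_mono mult_left_mono) (auto intro!: mult_pos_pos add_pos_nonneg)
  then show ?thesis unfolding p_ac_def using h by auto
qed

lemma lim_lam: assumes "s > 0" "c > 0" shows "((\<lambda>l::real. l / (c * (1 + l * s))) \<longlongrightarrow> 1 / (c * s)) at_top"
proof -
  have "((\<lambda>l. 1 / (c * (inverse l + s))) \<longlongrightarrow> 1 / (c * (0 + s))) at_top"
    by (intro tendsto_intros tendsto_inverse_0_at_top filterlim_ident) (use assms in auto)
  moreover have "eventually (\<lambda>l. 1 / (c * (inverse l + s)) = l / (c * (1 + l * s))) at_top"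
    using eventually_gt_at_top[of 0]
  proof eventually_elim
    case (elim l)
    have "inverse l + s = (1 + l * s) / l" using elim by (simp add: field_simps)
    then show ?case using elim by simp
  qed
  ultimately show ?thesis by (simp add: tendsto_cong)
qed

lemma pac_lim: assumes "s \<ge> 0" "v2 < v1"
  shows "((\<lambda>l. p_ac l v1 v2 x s) \<longlongrightarrow> (if v2 * s < x \<and> x < v1 * s then 1 / ((v1 - v2) * s) else 0)) at_top"
proof (cases "v2 * s < x \<and> x < v1 * s")
  case True
  then have "s > 0" using assms by (cases "s = 0") auto
  then show ?thesis using True lim_lam[of s "v1 - v2"] assms unfolding p_ac_def by simp
next
  case False
  then have "\<And>l. p_ac l v1 v2 x s = 0" unfolding p_ac_def by auto
  then show ?thesis by (simp only: if_not_P[OF False] tendsto_const)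
qed


lemma int_to_nn: assumes "l \<ge> 0" "v2 < v1" "xi > 0"
  shows "(\<lambda>s. exp (- xi * s) * p_ac l v1 v2 x s) integrable_on {0..t}"
    "ennreal (integral {0..t} (\<lambda>s. exp (- xi * s) * p_ac l v1 v2 x s)) =
     (\<integral>\<^sup>+ s. ennreal (exp (- xi * s) * p_ac l v1 v2 x s) * indicator {0..t} s \<partial>lborel)"
proof -
  let ?g = "\<lambda>s. exp (- xi * s) * p_ac l v1 v2 x s"
  show int: "?g integrable_on {0..t}"
  proof (rule measurable_bounded_by_integrable_imp_integrable_real[where g="\<lambda>_. l / (v1 - v2)"])
    show "?g \<in> borel_measurable (lebesgue_on {0..t})" by (rule gl_meas_leb)
    show "(\<lambda>_. l / (v1 - v2)) integrable_on {0..t}" by (rule integrable_const_ivl)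
    show "{0..t} \<in> sets lebesgue" by simp
    fix s :: real assume s: "s \<in> {0..t}"
    have e: "exp (- xi * s) \<le> 1" using s assms by simp
    have p0: "0 \<le> p_ac l v1 v2 x s" using pac_nonneg[of l s v2 v1 x] s assms by simp
    have p1: "p_ac l v1 v2 x s \<le> l / (v1 - v2)" using pac_bound[of l s v2 v1 x] s assms by simp
    have "\<bar>?g s\<bar> = exp (- xi * s) * p_ac l v1 v2 x s" using p0 by (simp add: abs_mult)
    also have "\<dots> \<le> 1 * (l / (v1 - v2))" using e p0 p1 by (intro mult_mono) auto
    finally show "\<bar>?g s\<bar> \<le> l / (v1 - v2)" by simp
  qed
  have "(?g has_integral integral {0..t} ?g) {0..t}" using int by (rule integrable_integral)
  from nn_integral_has_integral_lebesgue'[OF _ this]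
  show "ennreal (integral {0..t} ?g) = (\<integral>\<^sup>+ s. ennreal (?g s) * indicator {0..t} s \<partial>lborel)"
    using pac_nonneg[of l _ v2 v1 x] assms by simp
qed

lemma delta_nonneg: assumes "l \<ge> 0" shows "0 \<le> delta_int xi l v x t"
proof (cases "v \<noteq> 0 \<and> 0 < x / v \<and> x / v < t")
  case True
  have "0 \<le> l * (x / v)" by (rule mult_nonneg_nonneg) (use True assms in auto)
  then have "1 + l * (x / v) > 0" by linarith
  moreover have "\<bar>v\<bar> > 0" using True by simp
  ultimately have "\<bar>v\<bar> * (1 + l * (x / v)) > 0" by simp
  then show ?thesis using True unfolding delta_int_def by simp
next
  case False
  show ?thesis unfolding delta_int_def by (simp only: if_not_P[OF False] order_refl)
qed

lemma delta_lim: "((\<lambda>l. delta_int xi l v x t) \<longlongrightarrow> 0) at_top"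
proof (cases "v \<noteq> 0 \<and> 0 < x / v \<and> x / v < t")
  case True
  define a where "a = x / v"
  have a: "a > 0" using True a_def by simp
  have v: "\<bar>v\<bar> > 0" using True by simp
  have "LIM l at_top. a * l :> at_top"
    by (rule filterlim_tendsto_pos_mult_at_top[OF tendsto_const a filterlim_ident])
  then have "LIM l at_top. 1 + l * a :> at_top"
    by (intro filterlim_tendsto_add_at_top[OF tendsto_const]) (simp add: mult.commute)
  then have "LIM l at_top. \<bar>v\<bar> * (1 + l * a) :> at_top"
    by (rule filterlim_tendsto_pos_mult_at_top[OF tendsto_const v])
  then have "((\<lambda>l. exp (- xi * a) / (\<bar>v\<bar> * (1 + l * a))) \<longlongrightarrow> 0) at_top"
    by (intro tendsto_divide_0[OF tendsto_const] filterlim_at_top_imp_at_infinity)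
  then show ?thesis using True unfolding delta_int_def a_def by simp
next
  case False
  then have "\<And>l. delta_int xi l v x t = 0" unfolding delta_int_def by auto
  then show ?thesis by simp
qed

lemma T_eq:
  fixes L U :: real
  assumes xi: "xi > 0" and v: "v2 < v1" and L: "0 \<le> L"
    and iff: "\<And>s. s \<noteq> L \<Longrightarrow> s \<noteq> U \<Longrightarrow> ((0 \<le> s \<and> s \<le> t \<and> v2 * s < x \<and> x < v1 * s) \<longleftrightarrow> (L \<le> s \<and> s \<le> U))"
  shows "(\<integral>\<^sup>+ s. ennreal (exp (- xi * s) * (if v2 * s < x \<and> x < v1 * s then 1 / ((v1 - v2) * s) else 0))
            * indicator {0..t} s \<partial>lborel) = ennreal (1 / (v1 - v2)) * inc_Gamma 0 (L * xi) (U * xi)"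
proof -
  have c: "v1 - v2 > 0" using v by simp
  have "(\<integral>\<^sup>+ s. ennreal (exp (- xi * s) * (if v2 * s < x \<and> x < v1 * s then 1 / ((v1 - v2) * s) else 0))
            * indicator {0..t} s \<partial>lborel) =
        (\<integral>\<^sup>+ s. ennreal (1 / (v1 - v2)) * (ennreal (exp (- xi * s) / s) * indicator {L..U} s) \<partial>lborel)"
  proof (rule nn_integral_cong_AE)
    show "AE s in lborel. ennreal (exp (- xi * s) * (if v2 * s < x \<and> x < v1 * s then 1 / ((v1 - v2) * s) else 0))
            * indicator {0..t} s = ennreal (1 / (v1 - v2)) * (ennreal (exp (- xi * s) / s) * indicator {L..U} s)"
      using AE_lborel_singleton[of L] AE_lborel_singleton[of U]
    proof eventually_elim
      case (elim s)
      note i = iff[OF elim]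
      show ?case
      proof (cases "L \<le> s \<and> s \<le> U")
        case True
        then have h: "0 \<le> s \<and> s \<le> t \<and> v2 * s < x \<and> x < v1 * s" using i by simp
        have "exp (- xi * s) * (1 / ((v1 - v2) * s)) = (1 / (v1 - v2)) * (exp (- xi * s) / s)" by simp
        moreover have "ennreal ((1 / (v1 - v2)) * (exp (- xi * s) / s)) = ennreal (1 / (v1 - v2)) * ennreal (exp (- xi * s) / s)"
          using c h by (intro ennreal_mult) auto
        ultimately show ?thesis using h True by simp
      next
        case False
        then have "\<not> (0 \<le> s \<and> s \<le> t \<and> v2 * s < x \<and> x < v1 * s)" using i by simp
        then show ?thesis using False by (auto simp: indicator_def)
      qed
    qed
  qed
  also have "\<dots> = ennreal (1 / (v1 - v2)) * (\<integral>\<^sup>+ s. ennreal (exp (- xi * s) / s) * indicator {L..U} s \<partial>lborel)"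
    by (rule nn_integral_cmult) measurable
  also have "(\<integral>\<^sup>+ s. ennreal (exp (- xi * s) / s) * indicator {L..U} s \<partial>lborel) = inc_Gamma 0 (L * xi) (U * xi)"
  proof -
    have "inc_Gamma 0 (L * xi) (U * xi) = (\<integral>\<^sup>+ u. ennreal (u powr (0 - 1) * exp (- u)) * indicator {L * xi..U * xi} u \<partial>lborel)"
      unfolding inc_Gamma_def by simp
    also have "\<dots> = ennreal \<bar>xi\<bar> * (\<integral>\<^sup>+ s. ennreal ((0 + xi * s) powr (0 - 1) * exp (- (0 + xi * s))) * indicator {L * xi..U * xi} (0 + xi * s) \<partial>lborel)"
      by (rule nn_integral_real_affine) (use xi in auto)
    also have "\<dots> = (\<integral>\<^sup>+ s. ennreal xi * (ennreal ((0 + xi * s) powr (0 - 1) * exp (- (0 + xi * s))) * indicator {L * xi..U * xi} (0 + xi * s)) \<partial>lborel)"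
      using xi by (subst nn_integral_cmult) auto
    also have "\<dots> = (\<integral>\<^sup>+ s. ennreal (exp (- xi * s) / s) * indicator {L..U} s \<partial>lborel)"
    proof (rule nn_integral_cong)
      fix s :: real
      have ind: "indicator {L * xi..U * xi} (xi * s) = (indicator {L..U} s :: ennreal)"
        using xi by (auto simp: indicator_def mult.commute)
      show "ennreal xi * (ennreal ((0 + xi * s) powr (0 - 1) * exp (- (0 + xi * s))) * indicator {L * xi..U * xi} (0 + xi * s))
          = ennreal (exp (- xi * s) / s) * indicator {L..U} s"
      proof (cases "L \<le> s \<and> s \<le> U")
        case True
        then have s: "s \<ge> 0" using L by simp
        have "ennreal xi * ennreal ((xi * s) powr (0 - 1) * exp (- (xi * s))) = ennreal (xi * ((xi * s) powr (0 - 1) * exp (- (xi * s))))"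
          using xi s by (intro ennreal_mult[symmetric]) auto
        also have "xi * ((xi * s) powr (0 - 1) * exp (- (xi * s))) = exp (- xi * s) / s"
          using xi s by (simp add: abs_mult)
        finally have e: "ennreal xi * ennreal ((xi * s) powr (0 - 1) * exp (- (xi * s))) = ennreal (exp (- xi * s) / s)" .
        show ?thesis by (simp only: add_0_left ind mult.assoc[symmetric] e)
      next
        case False
        then have z: "indicator {L..U} s = (0::ennreal)" by (auto simp: indicator_def)
        then have "indicator {L * xi..U * xi} (0 + xi * s) = (0::ennreal)" using ind by simp
        then show ?thesis using z by simp
      qed
    qed
    finally show ?thesis ..
  qed
  finally show ?thesis .
qed


theorem corollary4:
  fixes xi v1 v2 q x t :: real
  assumes "xi > 0" and "v2 < v1"
    and "(v2 < 0 \<and> 0 < v1) \<or> (0 < v2 \<and> v2 < v1)"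
    and "0 \<le> q" and "q \<le> 1"
    and "t > 0" and "v2 * t < x" and "x < v1 * t"
  shows "((\<lambda>lam. ennreal (tilde_p xi lam q v1 v2 x t)) \<longlongrightarrow>
           ennreal ((if v2 * t < x \<and> x < v1 * t then 1 else 0) * exp (- xi * t) / ((v1 - v2) * t))
           + ennreal (xi / (v1 - v2) * I_ind v1 v2 x t) * Gamma_xi xi v1 v2 x t) at_top"
proof -
  have c: "v1 - v2 > 0" using assms(2) by simp
  obtain L U where L0: "0 \<le> L"
    and iff: "\<And>s. s \<noteq> L \<Longrightarrow> s \<noteq> U \<Longrightarrow> ((0 \<le> s \<and> s \<le> t \<and> v2 * s < x \<and> x < v1 * s) \<longleftrightarrow> (L \<le> s \<and> s \<le> U))"
    and G: "Gamma_xi xi v1 v2 x t = inc_Gamma 0 (L * xi) (U * xi)"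
    and I1: "I_ind v1 v2 x t = 1"
  proof (cases "v2 < 0 \<and> 0 < v1")
    case True
    show ?thesis
    proof (rule that[of "M_x v1 v2 x" t])
      have "x / v1 \<ge> 0 \<or> x / v2 > 0" using True
        by (cases "x \<ge> 0") (auto simp: zero_le_divide_iff zero_less_divide_iff)
      then show L0: "0 \<le> M_x v1 v2 x" unfolding M_x_def by auto
      fix s :: real
      assume s: "s \<noteq> M_x v1 v2 x" "s \<noteq> t"
      have e1: "v2 * s < x \<longleftrightarrow> x / v2 < s" using True by (simp add: neg_divide_less_eq mult.commute)
      have e2: "x < v1 * s \<longleftrightarrow> x / v1 < s" using True by (simp add: pos_divide_less_eq mult.commute)
      show "(0 \<le> s \<and> s \<le> t \<and> v2 * s < x \<and> x < v1 * s) \<longleftrightarrow> (M_x v1 v2 x \<le> s \<and> s \<le> t)"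
        using e1 e2 L0 s unfolding M_x_def by auto
    next
      show "Gamma_xi xi v1 v2 x t = inc_Gamma 0 (M_x v1 v2 x * xi) (t * xi)"
        unfolding Gamma_xi_def using True by simp
    next
      have "v2 * t < 0" using True assms(6) by (simp add: mult_neg_pos)
      then show "I_ind v1 v2 x t = 1" unfolding I_ind_def using assms(7,8) by (simp add: min_def)
    qed
  next
    case False
    then have v2: "0 < v2" using assms(3) by auto
    have "v2 * t > 0" using v2 assms(6) by simp
    then have x: "x > 0" using assms(7) by simp
    have v1: "v1 > 0" using v2 assms(2) by simp
    show ?thesis
    proof (rule that[of "x / v1" "m_xt v2 x t"])
      show L0: "0 \<le> x / v1" using x v1 by simp
      fix s :: real
      assume s: "s \<noteq> x / v1" "s \<noteq> m_xt v2 x t"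
      have e1: "v2 * s < x \<longleftrightarrow> s < x / v2" using v2 by (simp add: pos_less_divide_eq mult.commute)
      have e2: "x < v1 * s \<longleftrightarrow> x / v1 < s" using v1 by (simp add: pos_divide_less_eq mult.commute)
      show "(0 \<le> s \<and> s \<le> t \<and> v2 * s < x \<and> x < v1 * s) \<longleftrightarrow> (x / v1 \<le> s \<and> s \<le> m_xt v2 x t)"
        using e1 e2 L0 s unfolding m_xt_def min_def by auto
    next
      show "Gamma_xi xi v1 v2 x t = inc_Gamma 0 (x / v1 * xi) (m_xt v2 x t * xi)"
        unfolding Gamma_xi_def by (simp only: if_not_P[OF False])
    next
      show "I_ind v1 v2 x t = 1" unfolding I_ind_def using \<open>v2 * t > 0\<close> x assms(8) by (simp add: min_def)
    qed
  qed
  define F where "F l = (\<integral>\<^sup>+ s. ennreal (exp (- xi * s) * p_ac l v1 v2 x s) * indicator {0..t} s \<partial>lborel)" for l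
  define T where "T = (\<integral>\<^sup>+ s. ennreal (exp (- xi * s) * (if v2 * s < x \<and> x < v1 * s then 1 / ((v1 - v2) * s) else 0))
            * indicator {0..t} s \<partial>lborel)"
  have TG: "T = ennreal (1 / (v1 - v2)) * Gamma_xi xi v1 v2 x t"
    unfolding T_def G by (rule T_eq[OF assms(1) assms(2) L0 iff])
  have pmono: "ennreal (exp (- xi * s) * p_ac l v1 v2 x s) * indicator {0..t} s
      \<le> ennreal (exp (- xi * s) * p_ac m v1 v2 x s) * indicator {0..t} s" if "0 \<le> l" "l \<le> m" for l m s
  proof (cases "s \<in> {0..t}")
    case True
    then show ?thesis using that pac_mono[of l m s v2 v1 x] assms(2)
      by (auto intro!: ennreal_leI mult_left_mono)
  qed simp
  have Fmono: "F l \<le> F m" if "0 \<le> l" "l \<le> m" for l m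
    unfolding F_def by (rule nn_integral_mono) (rule pmono[OF that])
  have Fle: "F l \<le> T" if "0 \<le> l" for l
    unfolding F_def T_def
  proof (rule nn_integral_mono)
    fix s
    show "ennreal (exp (- xi * s) * p_ac l v1 v2 x s) * indicator {0..t} s
      \<le> ennreal (exp (- xi * s) * (if v2 * s < x \<and> x < v1 * s then 1 / ((v1 - v2) * s) else 0)) * indicator {0..t} s"
    proof (cases "s \<in> {0..t}")
      case True
      then show ?thesis using that pac_le[of l s v2 v1 x] assms(2)
        by (auto intro!: ennreal_leI mult_left_mono simp del: divide_divide_eq_left)
    qed simp
  qed
  have Tsup: "T = (SUP n. F (real n))"
    unfolding F_def T_def
  proof (subst nn_integral_monotone_convergence_SUP[symmetric])
    show "incseq (\<lambda>n s. ennreal (exp (- xi * s) * p_ac (real n) v1 v2 x s) * indicator {0..t} s)"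
      unfolding incseq_def le_fun_def using pmono by simp
    show "(\<lambda>s. ennreal (exp (- xi * s) * p_ac (real n) v1 v2 x s) * indicator {0..t} s) \<in> borel_measurable lborel" for n
      unfolding p_ac_def by measurable
    show "(\<integral>\<^sup>+ s. ennreal (exp (- xi * s) * (if v2 * s < x \<and> x < v1 * s then 1 / ((v1 - v2) * s) else 0)) * indicator {0..t} s \<partial>lborel)
      = (\<integral>\<^sup>+ s. (SUP n. ennreal (exp (- xi * s) * p_ac (real n) v1 v2 x s) * indicator {0..t} s) \<partial>lborel)"
    proof (rule nn_integral_cong)
      fix s :: real
      show "ennreal (exp (- xi * s) * (if v2 * s < x \<and> x < v1 * s then 1 / ((v1 - v2) * s) else 0)) * indicator {0..t} s
        = (SUP n. ennreal (exp (- xi * s) * p_ac (real n) v1 v2 x s) * indicator {0..t} s)"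
      proof (cases "s \<in> {0..t}")
        case True
        have inc: "incseq (\<lambda>n. ennreal (exp (- xi * s) * p_ac (real n) v1 v2 x s))"
          unfolding incseq_def
        proof (intro allI impI)
          fix m n :: nat assume "m \<le> n"
          then show "ennreal (exp (- xi * s) * p_ac (real m) v1 v2 x s) \<le> ennreal (exp (- xi * s) * p_ac (real n) v1 v2 x s)"
            using pmono[of "real m" "real n" s] True by simp
        qed
        have "((\<lambda>n. p_ac (real n) v1 v2 x s) \<longlongrightarrow> (if v2 * s < x \<and> x < v1 * s then 1 / ((v1 - v2) * s) else 0)) sequentially"
          by (rule filterlim_compose[OF pac_lim filterlim_real_sequentially]) (use True assms(2) in auto)
        then have "(\<lambda>n. ennreal (exp (- xi * s) * p_ac (real n) v1 v2 x s)) \<longlonglongrightarrow>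
             ennreal (exp (- xi * s) * (if v2 * s < x \<and> x < v1 * s then 1 / ((v1 - v2) * s) else 0))"
          by (intro tendsto_ennrealI tendsto_mult tendsto_const)
        from LIMSEQ_unique[OF LIMSEQ_SUP[OF inc] this] show ?thesis using True by simp
      qed simp
    qed
  qed
  have Flim: "(F \<longlongrightarrow> T) at_top"
  proof (rule increasing_tendsto)
    show "\<forall>\<^sub>F l in at_top. F l \<le> T"
      using eventually_ge_at_top[of 0] by eventually_elim (rule Fle)
    fix y assume "y < T"
    then obtain n where n: "y < F (real n)" unfolding Tsup by (auto simp: less_SUP_iff)
    show "\<forall>\<^sub>F l in at_top. y < F l"
      using eventually_ge_at_top[of "real n"]
    proof eventually_elim
      case (elim l)
      then show ?case using n Fmono[of "real n" l] by simp
    qed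
  qed
  have dec: "ennreal (tilde_p xi l q v1 v2 x t) =
      ennreal (exp (- xi * t) * p_ac l v1 v2 x t) + ennreal xi * F l
      + ennreal (xi * (q * delta_int xi l v1 x t + (1 - q) * delta_int xi l v2 x t))" if l: "l \<ge> 0" for l
  proof -
    let ?J = "integral {0..t} (\<lambda>s. exp (- xi * s) * p_ac l v1 v2 x s)"
    have eq: "tilde_p xi l q v1 v2 x t = exp (- xi * t) * p_ac l v1 v2 x t + xi * ?J
        + xi * (q * delta_int xi l v1 x t + (1 - q) * delta_int xi l v2 x t)"
      by (simp add: tilde_p_def tilde_p_cond_def algebra_simps)
    have A: "0 \<le> exp (- xi * t) * p_ac l v1 v2 x t"
      using pac_nonneg[of l t v2 v1 x] l assms(2,6) by simp
    have J: "0 \<le> ?J"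
      using int_to_nn(1)[OF l assms(2,1), where x=x and t=t] pac_nonneg[of l _ v2 v1 x] l assms(2)
      by (intro integral_nonneg) auto
    have D: "0 \<le> xi * (q * delta_int xi l v1 x t + (1 - q) * delta_int xi l v2 x t)"
      using delta_nonneg[OF l, of xi v1 x t] delta_nonneg[OF l, of xi v2 x t] assms(1,4,5) by simp
    have "ennreal (xi * ?J) = ennreal xi * F l"
      using int_to_nn(2)[OF l assms(2,1), where x=x and t=t] J assms(1) unfolding F_def
      by (simp add: ennreal_mult)
    then show ?thesis unfolding eq using A J D assms(1)
      by (simp add: ennreal_plus[symmetric])
  qed
  have L1: "((\<lambda>l. ennreal (exp (- xi * t) * p_ac l v1 v2 x t)) \<longlongrightarrow> ennreal (exp (- xi * t) * (1 / ((v1 - v2) * t)))) at_top"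
  proof -
    have "((\<lambda>l. p_ac l v1 v2 x t) \<longlongrightarrow> 1 / ((v1 - v2) * t)) at_top"
      using pac_lim[of t v2 v1 x] assms(2,6,7,8) by simp
    then show ?thesis by (intro tendsto_ennrealI tendsto_mult tendsto_const)
  qed
  have L2: "((\<lambda>l. ennreal xi * F l) \<longlongrightarrow> ennreal xi * T) at_top"
    by (rule ennreal_tendsto_cmult[OF _ Flim]) simp
  have L3: "((\<lambda>l. ennreal (xi * (q * delta_int xi l v1 x t + (1 - q) * delta_int xi l v2 x t))) \<longlongrightarrow>
      ennreal (xi * (q * 0 + (1 - q) * 0))) at_top"
    by (intro tendsto_ennrealI tendsto_mult tendsto_add tendsto_const delta_lim)
  have lim: "((\<lambda>l. ennreal (tilde_p xi l q v1 v2 x t)) \<longlongrightarrow>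
      ennreal (exp (- xi * t) * (1 / ((v1 - v2) * t))) + ennreal xi * T + ennreal (xi * (q * 0 + (1 - q) * 0))) at_top"
  proof (rule tendsto_cong[THEN iffD1, OF _ tendsto_add[OF tendsto_add[OF L1 L2] L3]])
    show "\<forall>\<^sub>F l in at_top. ennreal (exp (- xi * t) * p_ac l v1 v2 x t) + ennreal xi * F l
      + ennreal (xi * (q * delta_int xi l v1 x t + (1 - q) * delta_int xi l v2 x t)) = ennreal (tilde_p xi l q v1 v2 x t)"
      using eventually_ge_at_top[of 0] by eventually_elim (simp add: dec)
  qed
  have lim': "((\<lambda>l. ennreal (tilde_p xi l q v1 v2 x t)) \<longlongrightarrow>
      ennreal (exp (- xi * t) * (1 / ((v1 - v2) * t))) + ennreal xi * T) at_top"
    using lim by simp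
  have e1: "ennreal xi * T = ennreal (xi / (v1 - v2) * I_ind v1 v2 x t) * Gamma_xi xi v1 v2 x t"
    unfolding TG I1 using assms(1) c by (simp add: ennreal_mult'[symmetric] mult.assoc[symmetric])
  have e2: "(if v2 * t < x \<and> x < v1 * t then 1 else 0) * exp (- xi * t) / ((v1 - v2) * t) =
      exp (- xi * t) * (1 / ((v1 - v2) * t))"
    using assms(7,8) by simp
  show ?thesis unfolding e2 e1[symmetric] by (rule lim')
qed

end
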